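(* Let $u:\mathbb{R}^d\to\mathbb{R}$ be a bounded Borel function and let $\lambda$ be a Radon measure on $\mathbb{R}^d$. Assume that $\mathcal{N}_u$ is $|\lambda|$-negligible. Then for every $\rho\in\mathcal{K}$ with support contained in $B_{1/2}$, setting $u_\ell=u*\rho_\ell$ and $\lambda_\ell=\lambda*\rho_\ell$, one has $u_\ell\lambda_\ell\rightharpoonup u^{\rho*\rho}\lambda$ weakly as measures as $\ell\to0$ (i.e. $\int\phi\,u_\ell\lambda_\ell\,dx\to\int\phi\,u^{\rho*\rho}\,d\lambda$ for every $\phi\in C_c(\mathbb{R}^d)$), where $u^{\rho*\rho}(x)=\int(\rho*\rho)(z)v(z)\,dz$ with $v$ the blow up of $u$ at $x$ (defined for $x\notin\mathcal{N}_u$).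
   Context: $\mathcal{K}$ is the set of $\rho\in C^\infty_c(B_1)$ that are even with $\int\rho=1$; $\rho_\ell(x)=\ell^{-d}\rho(x/\ell)$. Blow-up: $u$ admits a blow up at $x_0$ if there is $v\in L^1(B_1)$ with $\lim_{\ell\to0}\int_{B_1}|u(x_0+\ell z)-v(z)|\,dz=0$ (full limit $\ell\to0$); $\mathcal{N}_u$ is the set of points where $u$ admits no blow up. *)

theory Defs
  imports "HOL-Analysis.Analysis"
begin

definition pderiv_dir :: "'a::euclidean_space \<Rightarrow> ('a \<Rightarrow> real) \<Rightarrow> 'a \<Rightarrow> real" where
  "pderiv_dir b f = (\<lambda>x. frechet_derivative f (at x) b)"

definition smooth_fun :: "('a::euclidean_space \<Rightarrow> real) \<Rightarrow> bool" where
  "smooth_fun f \<longleftrightarrow> (\<forall>bs. set bs \<subseteq> Basis \<longrightarrow>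
      (\<forall>x. foldr pderiv_dir bs f differentiable (at x)))"

definition supp :: "('a::real_normed_vector \<Rightarrow> real) \<Rightarrow> 'a set" where
  "supp f = closure {x. f x \<noteq> 0}"

definition mollifiers :: "('a::euclidean_space \<Rightarrow> real) set" where
  "mollifiers = {\<rho>. smooth_fun \<rho> \<and> compact (supp \<rho>) \<and> supp \<rho> \<subseteq> ball 0 1
       \<and> (\<forall>x. \<rho> (- x) = \<rho> x) \<and> integral\<^sup>L lborel \<rho> = 1}"

definition rescale :: "('a::euclidean_space \<Rightarrow> real) \<Rightarrow> real \<Rightarrow> 'a \<Rightarrow> real" where
  "rescale \<rho> l x = l powr (- real DIM('a)) * \<rho> ((1 / l) *\<^sub>R x)"

definition conv :: "('a::euclidean_space \<Rightarrow> real) \<Rightarrow> ('a \<Rightarrow> real) \<Rightarrow> 'a \<Rightarrow> real" where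
  "conv f g x = (\<integral>y. f (x - y) * g y \<partial>lborel)"

text \<open>Convolution of the signed measure sigma*mu (polar form) with a function g:
  (lambda * g)(x) = integral g(x - y) d lambda(y).\<close>
definition conv_meas :: "'a::euclidean_space measure \<Rightarrow> ('a \<Rightarrow> real) \<Rightarrow> ('a \<Rightarrow> real) \<Rightarrow> 'a \<Rightarrow> real" where
  "conv_meas \<mu> \<sigma> g x = (\<integral>y. g (x - y) * \<sigma> y \<partial>\<mu>)"

definition is_blowup :: "('a::euclidean_space \<Rightarrow> real) \<Rightarrow> 'a \<Rightarrow> ('a \<Rightarrow> real) \<Rightarrow> bool" where
  "is_blowup u x0 v \<longleftrightarrow> set_integrable lborel (ball 0 1) v \<and>
     ((\<lambda>l. \<integral>z\<in>ball 0 1. \<bar>u (x0 + l *\<^sub>R z) - v z\<bar> \<partial>lborel) \<longlongrightarrow> 0) (at_right 0)"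

definition no_blowup_set :: "('a::euclidean_space \<Rightarrow> real) \<Rightarrow> 'a set" where
  "no_blowup_set u = {x. \<not> (\<exists>v. is_blowup u x v)}"

definition blowup_avg :: "('a::euclidean_space \<Rightarrow> real) \<Rightarrow> ('a \<Rightarrow> real) \<Rightarrow> 'a \<Rightarrow> real" where
  "blowup_avg u \<eta> x = (if \<exists>v. is_blowup u x v
      then (\<integral>z. \<eta> z * (SOME v. is_blowup u x v) z \<partial>lborel) else 0)"

definition radon_measure :: "'a::euclidean_space measure \<Rightarrow> bool" where
  "radon_measure \<mu> \<longleftrightarrow> sets \<mu> = sets borel \<and> (\<forall>K. compact K \<longrightarrow> emeasure \<mu> K < \<infinity>)"

end

theory Submission
  imports Defs
begin


lemma dct_at_right:
  fixes s :: "real \<Rightarrow> 'a \<Rightarrow> real" and w f M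
  assumes "f \<in> borel_measurable M" "\<And>t. s t \<in> borel_measurable M" "integrable M w"
    "AE x in M. ((\<lambda>t. s t x) \<longlongrightarrow> f x) (at_right 0)"
    "\<forall>\<^sub>F t in at_right 0. AE x in M. norm (s t x) \<le> w x"
  shows "((\<lambda>t. integral\<^sup>L M (s t)) \<longlongrightarrow> integral\<^sup>L M f) (at_right 0)"
proof -
  have "((\<lambda>t. integral\<^sup>L M (s (inverse t))) \<longlongrightarrow> integral\<^sup>L M f) at_top"
  proof (rule integral_dominated_convergence_at_top[where w=w])
    show "AE x in M. ((\<lambda>t. s (inverse t) x) \<longlongrightarrow> f x) at_top"
      using assms(4) by eventually_elim (simp add: filterlim_at_right_to_top)
    show "\<forall>\<^sub>F t in at_top. AE x in M. norm (s (inverse t) x) \<le> w x"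
      using assms(5) by (simp add: eventually_at_right_to_top)
  qed (use assms in auto)
  then show ?thesis by (simp add: filterlim_at_right_to_top)
qed

lemma lborel_integral_affine_eq:
  fixes g :: "'a::euclidean_space \<Rightarrow> real"
  assumes c: "c \<noteq> 0" and g: "g \<in> borel_measurable borel"
  shows "integral\<^sup>L lborel g = \<bar>c\<bar>^DIM('a) * (\<integral>x. g (t + c *\<^sub>R x) \<partial>lborel)"
proof -
  have "integral\<^sup>L lborel g = integral\<^sup>L (density (distr lborel borel (\<lambda>x. t + c *\<^sub>R x)) (\<lambda>_. \<bar>c\<bar>^DIM('a))) g"
    using arg_cong[of _ _ "\<lambda>M. integral\<^sup>L M g", OF lborel_affine[OF c, of t]] .
  also have "\<dots> = integral\<^sup>L (distr lborel borel (\<lambda>x. t + c *\<^sub>R x)) (\<lambda>x. \<bar>c\<bar>^DIM('a) *\<^sub>R g x)"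
    using g by (subst integral_density[symmetric]) (auto simp: ennreal_power)
  also have "\<dots> = (\<integral>x. \<bar>c\<bar>^DIM('a) *\<^sub>R g (t + c *\<^sub>R x) \<partial>lborel)"
    using g by (subst integral_distr) auto
  finally show ?thesis by simp
qed

lemma integrable_bdd_supp:
  fixes f :: "'b \<Rightarrow> real"
  assumes "f \<in> borel_measurable M" "S \<in> sets M" "emeasure M S < \<infinity>"
    "\<And>x. x \<in> space M \<Longrightarrow> \<bar>f x\<bar> \<le> B * indicator S x"
  shows "integrable M f"
proof (rule Bochner_Integration.integrable_bound[where f="\<lambda>x. B * indicator S x"])
  show "integrable M (\<lambda>x. B * indicator S x)"
    using assms by (intro integrable_mult_right integrable_real_indicator) auto
  show "AE x in M. norm (f x) \<le> norm (B * indicator S x)"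
    using assms(4) by (intro AE_I2) (simp, rule order_trans[OF _ abs_ge_self], simp)
qed (use assms in auto)

lemma abs_int_le:
  fixes f g :: "'b \<Rightarrow> real"
  assumes "f \<in> borel_measurable M" "integrable M g" "\<And>x. x \<in> space M \<Longrightarrow> \<bar>f x\<bar> \<le> g x"
  shows "\<bar>integral\<^sup>L M f\<bar> \<le> integral\<^sup>L M g"
proof -
  have i: "integrable M f"
    by (rule Bochner_Integration.integrable_bound[OF assms(2,1)]) (use assms(3) in \<open>intro AE_I2, simp, rule order_trans[OF _ abs_ge_self], simp\<close>)
  have "\<bar>integral\<^sup>L M f\<bar> \<le> (\<integral>x. \<bar>f x\<bar> \<partial>M)"
    using integral_norm_bound[of M f] by simp
  also have "\<dots> \<le> integral\<^sup>L M g"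
    using i assms by (intro integral_mono) auto
  finally show ?thesis .
qed

lemma meas_test:
  fixes u r :: "'a::euclidean_space \<Rightarrow> real"
  assumes [measurable]: "u \<in> borel_measurable borel" "r \<in> borel_measurable borel"
  shows "(\<lambda>x. \<integral>w. u (x - w) * r w \<partial>lborel) \<in> borel_measurable borel"
  by measurable


context
  fixes \<rho> :: "'a::euclidean_space \<Rightarrow> real"
  assumes \<rho>c: "continuous_on UNIV \<rho>" and \<rho>z: "\<And>a. 1/2 \<le> norm a \<Longrightarrow> \<rho> a = 0"
    and \<rho>e: "\<And>a. \<rho> (-a) = \<rho> a"
begin

lemma rho_borel[measurable]: "\<rho> \<in> borel_measurable borel"
  using \<rho>c by (rule borel_measurable_continuous_onI)

lemma rho_bdd: "\<exists>R>0. \<forall>a. \<bar>\<rho> a\<bar> \<le> R"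
proof -
  have "compact (\<rho> ` cball 0 1)"
    by (rule compact_continuous_image[OF continuous_on_subset[OF \<rho>c]]) auto
  then obtain B where B: "\<And>x. x \<in> \<rho> ` cball 0 1 \<Longrightarrow> norm x \<le> B"
    using compact_imp_bounded bounded_iff by metis
  have "\<bar>\<rho> a\<bar> \<le> max B 1" for a
  proof (cases "norm a \<le> 1")
    case True then show ?thesis using B[of "\<rho> a"] by auto
  next
    case False then show ?thesis using \<rho>z[of a] by auto
  qed
  then show ?thesis by (intro exI[of _ "max B 1"]) auto
qed

lemma rho_supp: "\<rho> a \<noteq> 0 \<Longrightarrow> norm a < 1/2"
  using \<rho>z by force

lemma rho_int: "integrable lborel \<rho>"
proof -
  obtain R where R: "R > 0" "\<And>a. \<bar>\<rho> a\<bar> \<le> R" using rho_bdd by auto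
  show ?thesis
  proof (rule integrable_bdd_supp[where S="cball 0 1" and B=R])
    fix x show "\<bar>\<rho> x\<bar> \<le> R * indicator (cball 0 1) x"
      using R rho_supp[of x] by (cases "\<rho> x = 0") (auto simp: indicator_def)
  qed (use emeasure_compact_finite[of "cball (0::'a) 1"] in auto)
qed

lemma rescale_scaled: "0 < l \<Longrightarrow> rescale \<rho> l (l *\<^sub>R a) = l powr (- real DIM('a)) * \<rho> a"
  by (simp add: rescale_def)

lemma rescale_supp: "0 < l \<Longrightarrow> rescale \<rho> l x \<noteq> 0 \<Longrightarrow> norm x < l/2"
proof -
  assume l: "0 < l" and ne: "rescale \<rho> l x \<noteq> 0"
  then have "\<rho> ((1/l) *\<^sub>R x) \<noteq> 0" by (auto simp: rescale_def)
  then have "norm ((1/l) *\<^sub>R x) < 1/2" by (rule rho_supp)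
  then show ?thesis using l by (simp add: field_simps)
qed

lemma rescale_borel[measurable]: "rescale \<rho> l \<in> borel_measurable borel"
  unfolding rescale_def by measurable

lemma powr_cancel: "0 < l \<Longrightarrow> l ^ DIM('a) * l powr (- real DIM('a)) = 1"
  by (simp add: powr_minus powr_realpow field_simps)

lemma powr_cancel_int: "0 < l \<Longrightarrow> l ^ DIM('a) * (\<integral>x. l powr (- real DIM('a)) * f x \<partial>M) = integral\<^sup>L M f"
proof -
  assume l: "0 < l"
  have "l ^ DIM('a) * (\<integral>x. l powr (- real DIM('a)) * f x \<partial>M) = (l ^ DIM('a) * l powr (- real DIM('a))) * integral\<^sup>L M f"
    by simp
  then show ?thesis using powr_cancel[OF l] by simp
qed

lemma rescale_bdd: "0 < l \<Longrightarrow> \<exists>B. \<forall>x. \<bar>rescale \<rho> l x\<bar> \<le> B"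
proof -
  assume l: "0 < l"
  obtain R where R: "R > 0" "\<And>a. \<bar>\<rho> a\<bar> \<le> R" using rho_bdd by auto
  have "\<bar>rescale \<rho> l x\<bar> \<le> l powr (- real DIM('a)) * R" for x
    using R l by (simp add: rescale_def abs_mult mult_left_mono)
  then show ?thesis by blast
qed

lemma int_abs_rescale_shift:
  assumes l: "0 < l"
  shows "(\<integral>x. \<bar>rescale \<rho> l (x - y)\<bar> \<partial>lborel) = (\<integral>a. \<bar>\<rho> a\<bar> \<partial>lborel)"
proof -
  have "(\<integral>x. \<bar>rescale \<rho> l (x - y)\<bar> \<partial>lborel) = \<bar>l\<bar>^DIM('a) * (\<integral>a. \<bar>rescale \<rho> l (y + l *\<^sub>R a - y)\<bar> \<partial>lborel)"
    using l by (intro lborel_integral_affine_eq) auto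
  also have "\<dots> = l^DIM('a) * (\<integral>a. l powr (- real DIM('a)) * \<bar>\<rho> a\<bar> \<partial>lborel)"
    using l by (simp add: rescale_scaled abs_mult)
  also have "\<dots> = (\<integral>a. \<bar>\<rho> a\<bar> \<partial>lborel)"
    using l by (simp add: powr_cancel mult.assoc[symmetric])
  finally show ?thesis .
qed

lemma int_abs_rho_shift: "(\<integral>z. \<bar>\<rho> (a - z)\<bar> \<partial>lborel) = (\<integral>a. \<bar>\<rho> a\<bar> \<partial>lborel)"
proof -
  have "(\<integral>a. \<bar>\<rho> a\<bar> \<partial>lborel) = \<bar>-1\<bar>^DIM('a) * (\<integral>z. \<bar>\<rho> (a + (-1) *\<^sub>R z)\<bar> \<partial>lborel)"
    by (intro lborel_integral_affine_eq) auto
  then show ?thesis by simp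
qed

lemma integrable_rescale_shift: "0 < l \<Longrightarrow> integrable lborel (\<lambda>x. \<bar>rescale \<rho> l (x - y)\<bar>)"
proof -
  assume l: "0 < l"
  then obtain B where B: "\<And>x. \<bar>rescale \<rho> l x\<bar> \<le> B" using rescale_bdd by auto
  show ?thesis
  proof (rule integrable_bdd_supp[where S="cball y l" and B=B])
    fix x show "\<bar>\<bar>rescale \<rho> l (x - y)\<bar>\<bar> \<le> B * indicator (cball y l) x"
      using B[of "x - y"] rescale_supp[OF l, of "x - y"] l
      by (cases "rescale \<rho> l (x - y) = 0") (auto simp: indicator_def dist_norm norm_minus_commute)
  qed (use emeasure_compact_finite[of "cball y l"] in auto)
qed

lemma integrable_rho_shift: "integrable lborel (\<lambda>z. \<bar>\<rho> (a - z)\<bar>)"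
proof -
  obtain R where R: "R > 0" "\<And>a. \<bar>\<rho> a\<bar> \<le> R" using rho_bdd by auto
  show ?thesis
  proof (rule integrable_bdd_supp[where S="cball a 1" and B=R])
    fix x show "\<bar>\<bar>\<rho> (a - x)\<bar>\<bar> \<le> R * indicator (cball a 1) x"
      using R(2)[of "a - x"] rho_supp[of "a - x"]
      by (cases "\<rho> (a - x) = 0") (auto simp: indicator_def dist_norm)
  qed (use emeasure_compact_finite[of "cball a 1"] in auto)
qed

lemma conv_borel[measurable]:
  assumes [measurable]: "u \<in> borel_measurable borel"
  shows "conv u (rescale \<rho> l) \<in> borel_measurable borel"
  unfolding conv_def by measurable

lemma conv_bdd:
  assumes u[measurable]: "u \<in> borel_measurable borel" and Mu: "\<And>x. \<bar>u x\<bar> \<le> Mu" and l: "0 < l"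
  shows "\<bar>conv u (rescale \<rho> l) x\<bar> \<le> Mu * (\<integral>a. \<bar>\<rho> a\<bar> \<partial>lborel)"
proof -
  have i: "integrable lborel (\<lambda>w. \<bar>rescale \<rho> l w\<bar>)"
    using integrable_rescale_shift[OF l, of 0] by simp
  have "\<bar>conv u (rescale \<rho> l) x\<bar> \<le> (\<integral>w. Mu * \<bar>rescale \<rho> l w\<bar> \<partial>lborel)"
    unfolding conv_def
  proof (rule abs_int_le)
    show "integrable lborel (\<lambda>w. Mu * \<bar>rescale \<rho> l w\<bar>)" using i by simp
    fix w show "\<bar>u (x - w) * rescale \<rho> l w\<bar> \<le> Mu * \<bar>rescale \<rho> l w\<bar>"
      using Mu[of "x - w"] by (simp add: abs_mult mult_right_mono)
  qed measurable
  also have "\<dots> = Mu * (\<integral>a. \<bar>\<rho> a\<bar> \<partial>lborel)"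
    using int_abs_rescale_shift[OF l, of 0] by simp
  finally show ?thesis .
qed

lemma conv_at:
  assumes u[measurable]: "u \<in> borel_measurable borel" and l: "0 < l"
  shows "conv u (rescale \<rho> l) (y + l *\<^sub>R a) = (\<integral>z. u (y + l *\<^sub>R z) * \<rho> (a - z) \<partial>lborel)"
proof -
  have e1: "\<And>z. l *\<^sub>R a + (-l) *\<^sub>R z = l *\<^sub>R (a - z)" and
       e2: "\<And>z. y + l *\<^sub>R a - (l *\<^sub>R a + (-l) *\<^sub>R z) = y + l *\<^sub>R z"
    by (simp_all add: algebra_simps)
  have e3: "\<And>z. y + l *\<^sub>R a - l *\<^sub>R (a - z) = y + l *\<^sub>R z"
    by (simp add: algebra_simps)
  have "conv u (rescale \<rho> l) (y + l *\<^sub>R a) = (\<integral>w. u (y + l *\<^sub>R a - w) * rescale \<rho> l w \<partial>lborel)"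
    by (simp add: conv_def)
  also have "\<dots> = \<bar>-l\<bar>^DIM('a) * (\<integral>z. u (y + l *\<^sub>R a - (l *\<^sub>R a + (-l) *\<^sub>R z)) * rescale \<rho> l (l *\<^sub>R a + (-l) *\<^sub>R z) \<partial>lborel)"
    by (rule lborel_integral_affine_eq) (use l in auto)
  also have "\<dots> = l^DIM('a) * (\<integral>z. l powr (- real DIM('a)) * (u (y + l *\<^sub>R z) * \<rho> (a - z)) \<partial>lborel)"
  proof -
    have eq: "\<And>z. u (y + l *\<^sub>R a - (l *\<^sub>R a + (-l) *\<^sub>R z)) * rescale \<rho> l (l *\<^sub>R a + (-l) *\<^sub>R z)
       = l powr (- real DIM('a)) * (u (y + l *\<^sub>R z) * \<rho> (a - z))"
      by (simp only: e1 e3 rescale_scaled[OF l]) simp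
    show ?thesis by (simp only: eq abs_minus_cancel abs_of_pos[OF l])
  qed
  also have "\<dots> = (\<integral>z. u (y + l *\<^sub>R z) * \<rho> (a - z) \<partial>lborel)"
    by (rule powr_cancel_int[OF l])
  finally show ?thesis .
qed

lemma G_borel[measurable]:
  assumes [measurable]: "u \<in> borel_measurable borel"
  shows "(\<lambda>a. \<integral>z. u (y + l *\<^sub>R z) * \<rho> (a - z) \<partial>lborel) \<in> borel_measurable borel"
  by measurable

lemma G_bdd:
  assumes u[measurable]: "u \<in> borel_measurable borel" and Mu: "\<And>x. \<bar>u x\<bar> \<le> Mu"
  shows "\<bar>\<integral>z. u (y + l *\<^sub>R z) * \<rho> (a - z) \<partial>lborel\<bar> \<le> Mu * (\<integral>a. \<bar>\<rho> a\<bar> \<partial>lborel)"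
proof -
  have "\<bar>\<integral>z. u (y + l *\<^sub>R z) * \<rho> (a - z) \<partial>lborel\<bar> \<le> (\<integral>z. Mu * \<bar>\<rho> (a - z)\<bar> \<partial>lborel)"
  proof (rule abs_int_le)
    show "integrable lborel (\<lambda>z. Mu * \<bar>\<rho> (a - z)\<bar>)" using integrable_rho_shift by simp
    fix z show "\<bar>u (y + l *\<^sub>R z) * \<rho> (a - z)\<bar> \<le> Mu * \<bar>\<rho> (a - z)\<bar>"
      using Mu[of "y + l *\<^sub>R z"] by (simp add: abs_mult mult_right_mono)
  qed measurable
  also have "\<dots> = Mu * (\<integral>a. \<bar>\<rho> a\<bar> \<partial>lborel)"
    using int_abs_rho_shift by simp
  finally show ?thesis .
qed

lemma F_eq:
  assumes u[measurable]: "u \<in> borel_measurable borel" and \<phi>[measurable]: "\<phi> \<in> borel_measurable borel" and l: "0 < l"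
  shows "(\<integral>x. \<phi> x * conv u (rescale \<rho> l) x * rescale \<rho> l (x - y) \<partial>lborel) =
    (\<integral>a. \<phi> (y + l *\<^sub>R a) * \<rho> a * (\<integral>z. u (y + l *\<^sub>R z) * \<rho> (a - z) \<partial>lborel) \<partial>lborel)"
proof -
  have "(\<integral>x. \<phi> x * conv u (rescale \<rho> l) x * rescale \<rho> l (x - y) \<partial>lborel) =
     \<bar>l\<bar>^DIM('a) * (\<integral>a. \<phi> (y + l *\<^sub>R a) * conv u (rescale \<rho> l) (y + l *\<^sub>R a) * rescale \<rho> l (y + l *\<^sub>R a - y) \<partial>lborel)"
    by (rule lborel_integral_affine_eq) (use l in auto)
  also have "\<dots> = l^DIM('a) * (\<integral>a. l powr (- real DIM('a)) * (\<phi> (y + l *\<^sub>R a) * \<rho> a * (\<integral>z. u (y + l *\<^sub>R z) * \<rho> (a - z) \<partial>lborel)) \<partial>lborel)"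
  proof -
    have "\<And>a. \<phi> (y + l *\<^sub>R a) * conv u (rescale \<rho> l) (y + l *\<^sub>R a) * rescale \<rho> l (y + l *\<^sub>R a - y)
      = l powr (- real DIM('a)) * (\<phi> (y + l *\<^sub>R a) * \<rho> a * (\<integral>z. u (y + l *\<^sub>R z) * \<rho> (a - z) \<partial>lborel))"
      by (simp add: rescale_scaled[OF l] conv_at[OF u l])
    then show ?thesis by (simp only: abs_of_pos[OF l])
  qed
  also have "\<dots> = (\<integral>a. \<phi> (y + l *\<^sub>R a) * \<rho> a * (\<integral>z. u (y + l *\<^sub>R z) * \<rho> (a - z) \<partial>lborel) \<partial>lborel)"
    by (rule powr_cancel_int[OF l])
  finally show ?thesis .
qed

lemma vb_facts:
  fixes v :: "'a \<Rightarrow> real"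
  assumes v: "set_integrable lborel (ball 0 1) v"
  shows "integrable lborel (\<lambda>z. indicator (ball 0 1) z * v z)"
    and "(\<lambda>z. indicator (ball 0 1) z * v z) \<in> borel_measurable borel"
proof -
  show i: "integrable lborel (\<lambda>z. indicator (ball 0 1) z * v z)"
    using v unfolding set_integrable_def by simp
  show "(\<lambda>z. indicator (ball 0 1) z * v z) \<in> borel_measurable borel"
    using borel_measurable_integrable[OF i] by simp
qed

lemma T_eq:
  fixes v :: "'a \<Rightarrow> real"
  assumes v: "set_integrable lborel (ball 0 1) v"
  shows "(\<integral>z. conv \<rho> \<rho> z * v z \<partial>lborel) =
    (\<integral>a. \<rho> a * (\<integral>z. (indicator (ball 0 1) z * v z) * \<rho> (a - z) \<partial>lborel) \<partial>lborel)"
proof -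
  define vb where "vb z = indicator (ball 0 1) z * v z" for z
  have vbi: "integrable lborel vb" and [measurable]: "vb \<in> borel_measurable borel"
    using vb_facts[OF v] unfolding vb_def[abs_def] by auto
  obtain R where R: "R > 0" "\<And>a. \<bar>\<rho> a\<bar> \<le> R" using rho_bdd by auto
  have zero: "\<rho> (z - b) * \<rho> b = 0" if "\<not> norm z < 1" for z b
  proof (rule ccontr)
    assume "\<rho> (z - b) * \<rho> b \<noteq> 0"
    then have "norm (z - b) < 1/2" "norm b < 1/2" using rho_supp by auto
    moreover have "norm (z - b + b) \<le> norm (z - b) + norm b" by (rule norm_triangle_ineq)
    ultimately have "norm (z - b + b) < 1" by linarith
    then show False using that by simp
  qed
  have s1: "conv \<rho> \<rho> z * v z = (\<integral>b. \<rho> (z - b) * \<rho> b * vb z \<partial>lborel)" for z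
  proof (cases "norm z < 1")
    case True then show ?thesis by (simp add: conv_def vb_def)
  next
    case False then show ?thesis by (simp add: conv_def zero)
  qed
  have N1: "integrable lborel (\<lambda>b. \<bar>\<rho> b\<bar>)" using rho_int by simp
  have int: "integrable (lborel \<Otimes>\<^sub>M lborel) (\<lambda>(z, b). \<rho> (z - b) * \<rho> b * vb z)"
  proof (rule lborel_pair.Fubini_integrable)
    show "(\<lambda>(z, b). \<rho> (z - b) * \<rho> b * vb z) \<in> borel_measurable (lborel \<Otimes>\<^sub>M lborel)"
      by measurable
    show "integrable lborel (\<lambda>z. \<integral>b. norm (case (z, b) of (z, b) \<Rightarrow> \<rho> (z - b) * \<rho> b * vb z) \<partial>lborel)"
    proof (rule Bochner_Integration.integrable_bound[where f="\<lambda>z. R * (\<integral>b. \<bar>\<rho> b\<bar> \<partial>lborel) * vb z"])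
      show "integrable lborel (\<lambda>z. R * (\<integral>b. \<bar>\<rho> b\<bar> \<partial>lborel) * vb z)" using vbi by simp
      show "(\<lambda>z. \<integral>b. norm (case (z, b) of (z, b) \<Rightarrow> \<rho> (z - b) * \<rho> b * vb z) \<partial>lborel) \<in> borel_measurable lborel"
        by measurable
      show "AE z in lborel. norm (\<integral>b. norm (case (z, b) of (z, b) \<Rightarrow> \<rho> (z - b) * \<rho> b * vb z) \<partial>lborel)
          \<le> norm (R * (\<integral>b. \<bar>\<rho> b\<bar> \<partial>lborel) * vb z)"
      proof (intro AE_I2)
        fix z
        have "\<bar>\<integral>b. \<bar>\<rho> (z - b) * \<rho> b * vb z\<bar> \<partial>lborel\<bar> \<le> (\<integral>b. R * \<bar>vb z\<bar> * \<bar>\<rho> b\<bar> \<partial>lborel)"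
        proof (rule abs_int_le)
          show "integrable lborel (\<lambda>b. R * \<bar>vb z\<bar> * \<bar>\<rho> b\<bar>)" using N1 by simp
          fix b show "\<bar>\<bar>\<rho> (z - b) * \<rho> b * vb z\<bar>\<bar> \<le> R * \<bar>vb z\<bar> * \<bar>\<rho> b\<bar>"
          proof -
            have "\<bar>\<rho> (z - b)\<bar> * (\<bar>\<rho> b\<bar> * \<bar>vb z\<bar>) \<le> R * (\<bar>\<rho> b\<bar> * \<bar>vb z\<bar>)"
              using R(2)[of "z - b"] by (rule mult_right_mono) simp
            then show ?thesis by (simp add: abs_mult mult_ac)
          qed
        qed measurable
        also have "\<dots> = norm (R * (\<integral>b. \<bar>\<rho> b\<bar> \<partial>lborel) * vb z)"
          using R by (simp add: abs_mult mult_ac)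
        finally show "norm (\<integral>b. norm (case (z, b) of (z, b) \<Rightarrow> \<rho> (z - b) * \<rho> b * vb z) \<partial>lborel)
          \<le> norm (R * (\<integral>b. \<bar>\<rho> b\<bar> \<partial>lborel) * vb z)" by simp
      qed
    qed
    show "AE z in lborel. integrable lborel (\<lambda>b. case (z, b) of (z, b) \<Rightarrow> \<rho> (z - b) * \<rho> b * vb z)"
    proof (intro AE_I2)
      fix z
      show "integrable lborel (\<lambda>b. case (z, b) of (z, b) \<Rightarrow> \<rho> (z - b) * \<rho> b * vb z)"
      proof (rule Bochner_Integration.integrable_bound[where f="\<lambda>b. R * \<bar>vb z\<bar> * \<bar>\<rho> b\<bar>"])
        show "integrable lborel (\<lambda>b. R * \<bar>vb z\<bar> * \<bar>\<rho> b\<bar>)" using N1 by simp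
        show "AE b in lborel. norm (case (z, b) of (z, b) \<Rightarrow> \<rho> (z - b) * \<rho> b * vb z) \<le> norm (R * \<bar>vb z\<bar> * \<bar>\<rho> b\<bar>)"
        proof (intro AE_I2)
          fix b
          have "\<bar>\<rho> (z - b)\<bar> * (\<bar>\<rho> b\<bar> * \<bar>vb z\<bar>) \<le> R * (\<bar>\<rho> b\<bar> * \<bar>vb z\<bar>)"
            using R(2)[of "z - b"] by (rule mult_right_mono) simp
          then show "norm (case (z, b) of (z, b) \<Rightarrow> \<rho> (z - b) * \<rho> b * vb z) \<le> norm (R * \<bar>vb z\<bar> * \<bar>\<rho> b\<bar>)"
            using R by (simp add: abs_mult mult_ac)
        qed
      qed (simp only: prod.case, measurable)
    qed
  qed
  have "(\<integral>z. conv \<rho> \<rho> z * v z \<partial>lborel) = (\<integral>z. (\<integral>b. \<rho> (z - b) * \<rho> b * vb z \<partial>lborel) \<partial>lborel)"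
    by (simp add: s1)
  also have "\<dots> = (\<integral>b. (\<integral>z. \<rho> (z - b) * \<rho> b * vb z \<partial>lborel) \<partial>lborel)"
    using lborel_pair.Fubini_integral[of "\<lambda>z b. \<rho> (z - b) * \<rho> b * vb z"] int by simp
  also have "\<dots> = (\<integral>a. \<rho> a * (\<integral>z. vb z * \<rho> (a - z) \<partial>lborel) \<partial>lborel)"
  proof -
    have "(\<integral>z. \<rho> (z - b) * \<rho> b * vb z \<partial>lborel) = \<rho> b * (\<integral>z. vb z * \<rho> (b - z) \<partial>lborel)" for b
    proof -
      have eqz: "\<rho> (z - b) * \<rho> b * vb z = \<rho> b * (vb z * \<rho> (b - z))" for z
      proof -
        have e: "\<rho> (z - b) = \<rho> (b - z)" using \<rho>e[of "b - z"] by simp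
        show ?thesis by (simp only: e) (simp add: mult_ac)
      qed
      have "(\<integral>z. \<rho> (z - b) * \<rho> b * vb z \<partial>lborel) = (\<integral>z. \<rho> b * (vb z * \<rho> (b - z)) \<partial>lborel)"
        by (simp only: eqz)
      also have "\<dots> = \<rho> b * (\<integral>z. vb z * \<rho> (b - z) \<partial>lborel)"
        by (rule integral_mult_right_zero)
      finally show ?thesis .
    qed
    then show ?thesis by simp
  qed
  finally show ?thesis by (simp add: vb_def)
qed

lemma diff_bound:
  fixes v :: "'a \<Rightarrow> real"
  assumes u[measurable]: "u \<in> borel_measurable borel" and Mu: "\<And>x. \<bar>u x\<bar> \<le> Mu"
    and v: "set_integrable lborel (ball 0 1) v" and R: "\<And>a. \<bar>\<rho> a\<bar> \<le> R" and a: "norm a < 1/2"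
  shows "\<bar>(\<integral>z. u (y + l *\<^sub>R z) * \<rho> (a - z) \<partial>lborel) - (\<integral>z. (indicator (ball 0 1) z * v z) * \<rho> (a - z) \<partial>lborel)\<bar>
     \<le> R * (\<integral>z. indicator (ball 0 1) z * \<bar>u (y + l *\<^sub>R z) - v z\<bar> \<partial>lborel)"
proof -
  define vb where "vb z = indicator (ball 0 1) z * v z" for z
  have vbi: "integrable lborel vb" and [measurable]: "vb \<in> borel_measurable borel"
    using vb_facts[OF v] unfolding vb_def[abs_def] by auto
  have R0: "0 \<le> R" using R[of 0] by simp
  have [measurable]: "ball (0::'a) 1 \<in> sets borel" by simp
  have Mu0: "0 \<le> Mu" using Mu[of 0] by simp
  have i1: "integrable lborel (\<lambda>z. u (y + l *\<^sub>R z) * \<rho> (a - z))"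
  proof (rule Bochner_Integration.integrable_bound[where f="\<lambda>z. Mu * \<bar>\<rho> (a - z)\<bar>"])
    show "integrable lborel (\<lambda>z. Mu * \<bar>\<rho> (a - z)\<bar>)" using integrable_rho_shift by simp
    show "AE z in lborel. norm (u (y + l *\<^sub>R z) * \<rho> (a - z)) \<le> norm (Mu * \<bar>\<rho> (a - z)\<bar>)"
    proof (intro AE_I2)
      fix z
      have "\<bar>u (y + l *\<^sub>R z)\<bar> * \<bar>\<rho> (a - z)\<bar> \<le> Mu * \<bar>\<rho> (a - z)\<bar>"
        using Mu by (rule mult_right_mono) simp
      then show "norm (u (y + l *\<^sub>R z) * \<rho> (a - z)) \<le> norm (Mu * \<bar>\<rho> (a - z)\<bar>)"
        using Mu0 by (simp add: abs_mult)
    qed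
  qed measurable
  have i2: "integrable lborel (\<lambda>z. vb z * \<rho> (a - z))"
  proof (rule Bochner_Integration.integrable_bound[where f="\<lambda>z. R * vb z"])
    show "integrable lborel (\<lambda>z. R * vb z)" using vbi by simp
    show "AE z in lborel. norm (vb z * \<rho> (a - z)) \<le> norm (R * vb z)"
    proof (intro AE_I2)
      fix z
      have "\<bar>\<rho> (a - z)\<bar> * \<bar>vb z\<bar> \<le> R * \<bar>vb z\<bar>"
        using R by (rule mult_right_mono) simp
      then show "norm (vb z * \<rho> (a - z)) \<le> norm (R * vb z)"
        using R0 by (simp add: abs_mult mult_ac)
    qed
  qed measurable
  have ih: "integrable lborel (\<lambda>z. indicator (ball 0 1) z * u (y + l *\<^sub>R z))"
  proof (rule integrable_bdd_supp[where S="cball 0 1" and B=Mu])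
    fix x show "\<bar>indicator (ball 0 1) x * u (y + l *\<^sub>R x)\<bar> \<le> Mu * indicator (cball 0 1) x"
      using Mu[of "y + l *\<^sub>R x"] by (auto simp: indicator_def)
  next
    show "(\<lambda>z. indicator (ball 0 1) z * u (y + l *\<^sub>R z)) \<in> borel_measurable lborel"
      by measurable
  qed (use emeasure_compact_finite[of "cball (0::'a) 1"] in auto)
  have ig: "integrable lborel (\<lambda>z. indicator (ball 0 1) z * \<bar>u (y + l *\<^sub>R z) - v z\<bar>)"
  proof -
    have "integrable lborel (\<lambda>z. \<bar>indicator (ball 0 1) z * u (y + l *\<^sub>R z) - vb z\<bar>)"
      using integrable_abs[OF Bochner_Integration.integrable_diff[OF ih vbi]] by simp
    moreover have "\<And>z. \<bar>indicator (ball 0 1) z * u (y + l *\<^sub>R z) - vb z\<bar> = indicator (ball 0 1) z * \<bar>u (y + l *\<^sub>R z) - v z\<bar>"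
      by (simp add: vb_def indicator_def)
    ultimately show ?thesis by simp
  qed
  have "(\<integral>z. u (y + l *\<^sub>R z) * \<rho> (a - z) \<partial>lborel) - (\<integral>z. vb z * \<rho> (a - z) \<partial>lborel)
      = (\<integral>z. u (y + l *\<^sub>R z) * \<rho> (a - z) - vb z * \<rho> (a - z) \<partial>lborel)"
    using i1 i2 by (rule Bochner_Integration.integral_diff[symmetric])
  also have "\<bar>\<dots>\<bar> \<le> (\<integral>z. R * (indicator (ball 0 1) z * \<bar>u (y + l *\<^sub>R z) - v z\<bar>) \<partial>lborel)"
  proof (rule abs_int_le)
    show "integrable lborel (\<lambda>z. R * (indicator (ball 0 1) z * \<bar>u (y + l *\<^sub>R z) - v z\<bar>))"
      using ig by simp
    fix z
    show "\<bar>u (y + l *\<^sub>R z) * \<rho> (a - z) - vb z * \<rho> (a - z)\<bar> \<le> R * (indicator (ball 0 1) z * \<bar>u (y + l *\<^sub>R z) - v z\<bar>)"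
    proof (cases "\<rho> (a - z) = 0")
      case True then show ?thesis using R0 by simp
    next
      case False
      then have "norm (a - z) < 1/2" by (rule rho_supp)
      moreover have "norm z \<le> norm a + norm (a - z)"
        using norm_triangle_ineq4[of a "a - z"] by simp
      ultimately have z: "z \<in> ball 0 1" using a by simp
      have "\<bar>u (y + l *\<^sub>R z) - v z\<bar> * \<bar>\<rho> (a - z)\<bar> \<le> \<bar>u (y + l *\<^sub>R z) - v z\<bar> * R"
        using R by (rule mult_left_mono) simp
      moreover have "u (y + l *\<^sub>R z) * \<rho> (a - z) - vb z * \<rho> (a - z) = (u (y + l *\<^sub>R z) - v z) * \<rho> (a - z)"
        using z by (simp add: vb_def algebra_simps)
      ultimately show ?thesis using z by (simp add: abs_mult mult_ac)
    qed
  qed measurable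
  also have "\<dots> = R * (\<integral>z. indicator (ball 0 1) z * \<bar>u (y + l *\<^sub>R z) - v z\<bar> \<partial>lborel)"
    by simp
  finally show ?thesis by (simp add: vb_def)
qed

lemma F_tendsto:
  fixes v :: "'a \<Rightarrow> real"
  assumes u[measurable]: "u \<in> borel_measurable borel" and Mu: "\<And>x. \<bar>u x\<bar> \<le> Mu"
    and \<phi>c: "continuous_on UNIV \<phi>" and P: "\<And>x. \<bar>\<phi> x\<bar> \<le> P" and bl: "is_blowup u y v"
  shows "((\<lambda>l. \<integral>x. \<phi> x * conv u (rescale \<rho> l) x * rescale \<rho> l (x - y) \<partial>lborel)
           \<longlongrightarrow> \<phi> y * (\<integral>z. conv \<rho> \<rho> z * v z \<partial>lborel)) (at_right 0)"
proof -
  have \<phi>b[measurable]: "\<phi> \<in> borel_measurable borel" using \<phi>c by (rule borel_measurable_continuous_onI)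
  have v: "set_integrable lborel (ball 0 1) v"
    and Elim0: "((\<lambda>l. \<integral>z\<in>ball 0 1. \<bar>u (y + l *\<^sub>R z) - v z\<bar> \<partial>lborel) \<longlongrightarrow> 0) (at_right 0)"
    using bl unfolding is_blowup_def by auto
  define E where "E l = (\<integral>z. indicator (ball 0 1) z * \<bar>u (y + l *\<^sub>R z) - v z\<bar> \<partial>lborel)" for l
  have Elim: "(E \<longlongrightarrow> 0) (at_right 0)"
    using Elim0 unfolding E_def[abs_def] set_lebesgue_integral_def by simp
  define vb where "vb z = indicator (ball 0 1) z * v z" for z
  have vbi: "integrable lborel vb" and [measurable]: "vb \<in> borel_measurable borel"
    using vb_facts[OF v] unfolding vb_def[abs_def] by auto
  obtain R where R: "R > 0" "\<And>a. \<bar>\<rho> a\<bar> \<le> R" using rho_bdd by auto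
  define N1 where "N1 = (\<integral>a. \<bar>\<rho> a\<bar> \<partial>lborel)"
  have N1i: "integrable lborel (\<lambda>a. \<bar>\<rho> a\<bar>)" using rho_int by simp
  have P0: "0 \<le> P" using P[of 0] by simp
  have Mu0: "0 \<le> Mu" using Mu[of 0] by simp
  have N10: "0 \<le> N1" unfolding N1_def by simp
  define S where "S l = (\<integral>a. \<bar>\<phi> (y + l *\<^sub>R a) - \<phi> y\<bar> * \<bar>\<rho> a\<bar> \<partial>lborel)" for l
  have Sbd: "\<bar>\<bar>\<phi> (y + l *\<^sub>R a) - \<phi> y\<bar> * \<bar>\<rho> a\<bar>\<bar> \<le> 2 * P * \<bar>\<rho> a\<bar>" for l a
  proof -
    have "\<bar>\<phi> (y + l *\<^sub>R a) - \<phi> y\<bar> \<le> 2 * P" using P[of "y + l *\<^sub>R a"] P[of y] by linarith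
    then have "\<bar>\<phi> (y + l *\<^sub>R a) - \<phi> y\<bar> * \<bar>\<rho> a\<bar> \<le> 2 * P * \<bar>\<rho> a\<bar>" by (rule mult_right_mono) simp
    then show ?thesis by simp
  qed
  have Si: "integrable lborel (\<lambda>a. \<bar>\<phi> (y + l *\<^sub>R a) - \<phi> y\<bar> * \<bar>\<rho> a\<bar>)" for l
  proof (rule Bochner_Integration.integrable_bound[where f="\<lambda>a. 2 * P * \<bar>\<rho> a\<bar>"])
    show "integrable lborel (\<lambda>a. 2 * P * \<bar>\<rho> a\<bar>)" using N1i by simp
    show "AE a in lborel. norm (\<bar>\<phi> (y + l *\<^sub>R a) - \<phi> y\<bar> * \<bar>\<rho> a\<bar>) \<le> norm (2 * P * \<bar>\<rho> a\<bar>)"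
      using Sbd P0 by (intro AE_I2) (simp add: abs_mult)
  qed measurable
  have Slim: "(S \<longlongrightarrow> 0) (at_right 0)"
  proof -
    define ss where "ss l a = \<bar>\<phi> (y + l *\<^sub>R a) - \<phi> y\<bar> * \<bar>\<rho> a\<bar>" for l a
    have "((\<lambda>l. integral\<^sup>L lborel (ss l)) \<longlongrightarrow> integral\<^sup>L lborel (\<lambda>a::'a. 0)) (at_right 0)"
    proof (rule dct_at_right[where w="\<lambda>a. 2 * P * \<bar>\<rho> a\<bar>"])
      show "integrable lborel (\<lambda>a. 2 * P * \<bar>\<rho> a\<bar>)" using N1i by simp
      show "AE a in lborel. ((\<lambda>l. ss l a) \<longlongrightarrow> 0) (at_right 0)"
        unfolding ss_def
      proof (intro AE_I2)
        fix a
        have ic: "isCont \<phi> y" using \<phi>c by (simp add: continuous_on_eq_continuous_at)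
        have "((\<lambda>l. y + l *\<^sub>R a) \<longlongrightarrow> y + 0 *\<^sub>R a) (at_right 0)"
          by (intro tendsto_intros)
        then have "((\<lambda>l. y + l *\<^sub>R a) \<longlongrightarrow> y) (at_right 0)" by simp
        then have "((\<lambda>l. \<phi> (y + l *\<^sub>R a)) \<longlongrightarrow> \<phi> y) (at_right 0)"
          by (rule isCont_tendsto_compose[OF ic])
        then have "((\<lambda>l. \<bar>\<phi> (y + l *\<^sub>R a) - \<phi> y\<bar> * \<bar>\<rho> a\<bar>) \<longlongrightarrow> \<bar>\<phi> y - \<phi> y\<bar> * \<bar>\<rho> a\<bar>) (at_right 0)"
          by (intro tendsto_intros)
        then show "((\<lambda>l. \<bar>\<phi> (y + l *\<^sub>R a) - \<phi> y\<bar> * \<bar>\<rho> a\<bar>) \<longlongrightarrow> 0) (at_right 0)" by simp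
      qed
      show "\<forall>\<^sub>F l in at_right 0. AE a in lborel. norm (ss l a) \<le> 2 * P * \<bar>\<rho> a\<bar>"
        using Sbd unfolding ss_def by (intro always_eventually allI AE_I2) simp
    qed (auto simp: ss_def[abs_def])
    then show ?thesis by (simp add: S_def[abs_def] ss_def[abs_def])
  qed
  define G where "G l a = (\<integral>z. u (y + l *\<^sub>R z) * \<rho> (a - z) \<partial>lborel)" for l a
  define Tin where "Tin a = (\<integral>z. vb z * \<rho> (a - z) \<partial>lborel)" for a
  have Gm[measurable]: "G l \<in> borel_measurable borel" for l
    unfolding G_def[abs_def] by measurable
  have Tm[measurable]: "Tin \<in> borel_measurable borel"
    unfolding Tin_def[abs_def] by measurable
  have mphi: "(\<lambda>a. \<phi> (y + l *\<^sub>R a)) \<in> borel_measurable borel" for l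
    by (rule measurable_compose[OF _ \<phi>b]) simp
  have mF: "(\<lambda>a. \<phi> (y + l *\<^sub>R a) * \<rho> a * G l a) \<in> borel_measurable borel" for l
    using mphi[of l] Gm[of l] rho_borel by (intro borel_measurable_times) auto
  have mT: "(\<lambda>a. \<phi> y * (\<rho> a * Tin a)) \<in> borel_measurable borel"
    using Tm rho_borel by (intro borel_measurable_times) auto
  have mD: "(\<lambda>a. \<phi> (y + l *\<^sub>R a) * \<rho> a * G l a - \<phi> y * (\<rho> a * Tin a)) \<in> borel_measurable borel" for l
    using mF[of l] mT by (rule borel_measurable_diff)
  have Gb: "\<bar>G l a\<bar> \<le> Mu * N1" for l a
    unfolding G_def N1_def by (rule G_bdd[OF u Mu])
  have Tb: "\<bar>Tin a\<bar> \<le> R * (\<integral>z. \<bar>vb z\<bar> \<partial>lborel)" for a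
  proof -
    have "\<bar>Tin a\<bar> \<le> (\<integral>z. R * \<bar>vb z\<bar> \<partial>lborel)"
      unfolding Tin_def
    proof (rule abs_int_le)
      show "integrable lborel (\<lambda>z. R * \<bar>vb z\<bar>)" using vbi by simp
      fix z
      have "\<bar>\<rho> (a - z)\<bar> * \<bar>vb z\<bar> \<le> R * \<bar>vb z\<bar>" using R(2) by (rule mult_right_mono) simp
      then show "\<bar>vb z * \<rho> (a - z)\<bar> \<le> R * \<bar>vb z\<bar>" by (simp add: abs_mult mult_ac)
    qed measurable
    then show ?thesis by simp
  qed
  have T: "(\<integral>z. conv \<rho> \<rho> z * v z \<partial>lborel) = (\<integral>a. \<rho> a * Tin a \<partial>lborel)"
    unfolding Tin_def vb_def by (rule T_eq[OF v])
  have key: "\<bar>(\<integral>x. \<phi> x * conv u (rescale \<rho> l) x * rescale \<rho> l (x - y) \<partial>lborel) - \<phi> y * (\<integral>z. conv \<rho> \<rho> z * v z \<partial>lborel)\<bar>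
     \<le> Mu * N1 * S l + \<bar>\<phi> y\<bar> * R * E l * N1" if l: "0 < l" for l
  proof -
    have F: "(\<integral>x. \<phi> x * conv u (rescale \<rho> l) x * rescale \<rho> l (x - y) \<partial>lborel) = (\<integral>a. \<phi> (y + l *\<^sub>R a) * \<rho> a * G l a \<partial>lborel)"
      unfolding G_def by (rule F_eq[OF u \<phi>b l])
    have iF: "integrable lborel (\<lambda>a. \<phi> (y + l *\<^sub>R a) * \<rho> a * G l a)"
    proof (rule Bochner_Integration.integrable_bound[where f="\<lambda>a. P * (Mu * N1) * \<bar>\<rho> a\<bar>"])
      show "integrable lborel (\<lambda>a. P * (Mu * N1) * \<bar>\<rho> a\<bar>)" using N1i by simp
      show "AE a in lborel. norm (\<phi> (y + l *\<^sub>R a) * \<rho> a * G l a) \<le> norm (P * (Mu * N1) * \<bar>\<rho> a\<bar>)"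
      proof (intro AE_I2)
        fix a
        have "\<bar>\<phi> (y + l *\<^sub>R a)\<bar> * \<bar>G l a\<bar> \<le> P * (Mu * N1)"
          using P Gb P0 by (intro mult_mono) auto
        then have "\<bar>\<phi> (y + l *\<^sub>R a)\<bar> * \<bar>G l a\<bar> * \<bar>\<rho> a\<bar> \<le> P * (Mu * N1) * \<bar>\<rho> a\<bar>"
          by (rule mult_right_mono) simp
        then show "norm (\<phi> (y + l *\<^sub>R a) * \<rho> a * G l a) \<le> norm (P * (Mu * N1) * \<bar>\<rho> a\<bar>)"
          using P0 Mu0 N10 by (simp add: abs_mult mult_ac)
      qed
    qed (use mF[of l] in simp)
    have iT: "integrable lborel (\<lambda>a. \<phi> y * (\<rho> a * Tin a))"
    proof (rule Bochner_Integration.integrable_bound[where f="\<lambda>a. \<phi> y * (R * (\<integral>z. \<bar>vb z\<bar> \<partial>lborel)) * \<bar>\<rho> a\<bar>"])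
      show "integrable lborel (\<lambda>a. \<phi> y * (R * (\<integral>z. \<bar>vb z\<bar> \<partial>lborel)) * \<bar>\<rho> a\<bar>)" using N1i by simp
      show "AE a in lborel. norm (\<phi> y * (\<rho> a * Tin a)) \<le> norm (\<phi> y * (R * (\<integral>z. \<bar>vb z\<bar> \<partial>lborel)) * \<bar>\<rho> a\<bar>)"
      proof (intro AE_I2)
        fix a
        have "\<bar>Tin a\<bar> * \<bar>\<rho> a\<bar> \<le> (R * (\<integral>z. \<bar>vb z\<bar> \<partial>lborel)) * \<bar>\<rho> a\<bar>"
          using Tb by (rule mult_right_mono) simp
        then have "\<bar>\<phi> y\<bar> * (\<bar>Tin a\<bar> * \<bar>\<rho> a\<bar>) \<le> \<bar>\<phi> y\<bar> * ((R * (\<integral>z. \<bar>vb z\<bar> \<partial>lborel)) * \<bar>\<rho> a\<bar>)"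
          by (rule mult_left_mono) simp
        moreover have "0 \<le> (\<integral>z. \<bar>vb z\<bar> \<partial>lborel)" by simp
        ultimately show "norm (\<phi> y * (\<rho> a * Tin a)) \<le> norm (\<phi> y * (R * (\<integral>z. \<bar>vb z\<bar> \<partial>lborel)) * \<bar>\<rho> a\<bar>)"
          using R by (simp add: abs_mult mult_ac)
      qed
    qed (use mT in simp)
    have "(\<integral>x. \<phi> x * conv u (rescale \<rho> l) x * rescale \<rho> l (x - y) \<partial>lborel) - \<phi> y * (\<integral>z. conv \<rho> \<rho> z * v z \<partial>lborel)
        = (\<integral>a. \<phi> (y + l *\<^sub>R a) * \<rho> a * G l a \<partial>lborel) - (\<integral>a. \<phi> y * (\<rho> a * Tin a) \<partial>lborel)"
      unfolding F T by simp
    also have "\<dots> = (\<integral>a. \<phi> (y + l *\<^sub>R a) * \<rho> a * G l a - \<phi> y * (\<rho> a * Tin a) \<partial>lborel)"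
      using iF iT by (rule Bochner_Integration.integral_diff[symmetric])
    finally have eqD: "(\<integral>x. \<phi> x * conv u (rescale \<rho> l) x * rescale \<rho> l (x - y) \<partial>lborel) - \<phi> y * (\<integral>z. conv \<rho> \<rho> z * v z \<partial>lborel)
        = (\<integral>a. \<phi> (y + l *\<^sub>R a) * \<rho> a * G l a - \<phi> y * (\<rho> a * Tin a) \<partial>lborel)" .
    have "\<bar>(\<integral>a. \<phi> (y + l *\<^sub>R a) * \<rho> a * G l a - \<phi> y * (\<rho> a * Tin a) \<partial>lborel)\<bar> \<le> (\<integral>a. Mu * N1 * (\<bar>\<phi> (y + l *\<^sub>R a) - \<phi> y\<bar> * \<bar>\<rho> a\<bar>) + \<bar>\<phi> y\<bar> * R * E l * \<bar>\<rho> a\<bar> \<partial>lborel)"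
    proof (rule abs_int_le)
      show "integrable lborel (\<lambda>a. Mu * N1 * (\<bar>\<phi> (y + l *\<^sub>R a) - \<phi> y\<bar> * \<bar>\<rho> a\<bar>) + \<bar>\<phi> y\<bar> * R * E l * \<bar>\<rho> a\<bar>)"
        using Si N1i by (intro Bochner_Integration.integrable_add integrable_mult_right) auto
      fix a
      have e: "\<phi> (y + l *\<^sub>R a) * \<rho> a * G l a - \<phi> y * (\<rho> a * Tin a)
          = (\<phi> (y + l *\<^sub>R a) - \<phi> y) * \<rho> a * G l a + \<phi> y * (\<rho> a * (G l a - Tin a))"
        by (simp add: algebra_simps)
      have b1: "\<bar>(\<phi> (y + l *\<^sub>R a) - \<phi> y) * \<rho> a * G l a\<bar> \<le> Mu * N1 * (\<bar>\<phi> (y + l *\<^sub>R a) - \<phi> y\<bar> * \<bar>\<rho> a\<bar>)"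
      proof -
        have "\<bar>\<phi> (y + l *\<^sub>R a) - \<phi> y\<bar> * \<bar>\<rho> a\<bar> * \<bar>G l a\<bar> \<le> \<bar>\<phi> (y + l *\<^sub>R a) - \<phi> y\<bar> * \<bar>\<rho> a\<bar> * (Mu * N1)"
          using Gb by (rule mult_left_mono) simp
        then show ?thesis by (simp add: abs_mult mult_ac)
      qed
      have b2: "\<bar>\<phi> y * (\<rho> a * (G l a - Tin a))\<bar> \<le> \<bar>\<phi> y\<bar> * R * E l * \<bar>\<rho> a\<bar>"
      proof (cases "\<rho> a = 0")
        case True then show ?thesis by simp
      next
        case False
        then have a: "norm a < 1/2" by (rule rho_supp)
        have "\<bar>G l a - Tin a\<bar> \<le> R * E l"
          unfolding G_def Tin_def vb_def E_def by (rule diff_bound[OF u Mu v R(2) a])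
        then have "\<bar>\<rho> a\<bar> * \<bar>G l a - Tin a\<bar> \<le> \<bar>\<rho> a\<bar> * (R * E l)" by (rule mult_left_mono) simp
        then have "\<bar>\<phi> y\<bar> * (\<bar>\<rho> a\<bar> * \<bar>G l a - Tin a\<bar>) \<le> \<bar>\<phi> y\<bar> * (\<bar>\<rho> a\<bar> * (R * E l))" by (rule mult_left_mono) simp
        then show ?thesis by (simp add: abs_mult mult_ac)
      qed
      show "\<bar>\<phi> (y + l *\<^sub>R a) * \<rho> a * G l a - \<phi> y * (\<rho> a * Tin a)\<bar>
          \<le> Mu * N1 * (\<bar>\<phi> (y + l *\<^sub>R a) - \<phi> y\<bar> * \<bar>\<rho> a\<bar>) + \<bar>\<phi> y\<bar> * R * E l * \<bar>\<rho> a\<bar>"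
        unfolding e using b1 b2 abs_triangle_ineq[of "(\<phi> (y + l *\<^sub>R a) - \<phi> y) * \<rho> a * G l a" "\<phi> y * (\<rho> a * (G l a - Tin a))"]
        by linarith
    qed (use mD in simp)
    also have "\<dots> = Mu * N1 * S l + \<bar>\<phi> y\<bar> * R * E l * N1"
      unfolding S_def N1_def using Si N1i
      by (subst Bochner_Integration.integral_add) (auto intro: integrable_mult_right)
    finally show ?thesis unfolding eqD .
  qed

  have "((\<lambda>l. (\<integral>x. \<phi> x * conv u (rescale \<rho> l) x * rescale \<rho> l (x - y) \<partial>lborel) - \<phi> y * (\<integral>z. conv \<rho> \<rho> z * v z \<partial>lborel)) \<longlongrightarrow> 0) (at_right 0)"
  proof (rule Lim_null_comparison)
    show "\<forall>\<^sub>F l in at_right 0. norm ((\<integral>x. \<phi> x * conv u (rescale \<rho> l) x * rescale \<rho> l (x - y) \<partial>lborel) - \<phi> y * (\<integral>z. conv \<rho> \<rho> z * v z \<partial>lborel))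
        \<le> Mu * N1 * S l + \<bar>\<phi> y\<bar> * R * E l * N1"
      using eventually_at_right_less[of 0] by eventually_elim (use key in simp)
    have "((\<lambda>l. Mu * N1 * S l + \<bar>\<phi> y\<bar> * R * E l * N1) \<longlongrightarrow> Mu * N1 * 0 + \<bar>\<phi> y\<bar> * R * 0 * N1) (at_right 0)"
      using Slim Elim by (intro tendsto_intros)
    then show "((\<lambda>l. Mu * N1 * S l + \<bar>\<phi> y\<bar> * R * E l * N1) \<longlongrightarrow> 0) (at_right 0)" by simp
  qed
  then show ?thesis by (rule LIM_zero_cancel)
qed

end




lemma rho_props:
  fixes \<rho> :: "'a::euclidean_space \<Rightarrow> real"
  assumes \<rho>K: "\<rho> \<in> mollifiers" and \<rho>supp: "supp \<rho> \<subseteq> ball 0 (1/2)"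
  shows "continuous_on UNIV \<rho>" "\<And>a. 1/2 \<le> norm a \<Longrightarrow> \<rho> a = 0" "\<And>a. \<rho> (-a) = \<rho> a"
proof -
  have "smooth_fun \<rho>" using \<rho>K by (simp add: mollifiers_def)
  then have "\<forall>bs. set bs \<subseteq> Basis \<longrightarrow> (\<forall>x. foldr pderiv_dir bs \<rho> differentiable (at x))"
    unfolding smooth_fun_def by blast
  from this[rule_format, of "[]"] have "\<forall>x. \<rho> differentiable (at x)" by simp
  then have "\<And>x. isCont \<rho> x" using differentiable_imp_continuous_within by blast
  then show "continuous_on UNIV \<rho>" by (simp add: continuous_at_imp_continuous_on)
  show "\<rho> a = 0" if "1/2 \<le> norm a" for a
  proof (rule ccontr)
    assume "\<rho> a \<noteq> 0"
    then have "a \<in> {x. \<rho> x \<noteq> 0}" by simp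
    then have "a \<in> supp \<rho>" unfolding supp_def by (rule subsetD[OF closure_subset])
    then have "a \<in> ball 0 (1/2)" using \<rho>supp by (rule subsetD[rotated])
    then show False using that by simp
  qed
  show "\<rho> (-a) = \<rho> a" for a using \<rho>K unfolding mollifiers_def by blast
qed

lemma radon_sigma_finite:
  fixes \<mu> :: "'a::euclidean_space measure"
  assumes "radon_measure \<mu>"
  shows "sigma_finite_measure \<mu>"
proof
  have s: "sets \<mu> = sets borel" using assms by (simp add: radon_measure_def)
  then have sp: "space \<mu> = UNIV" using sets_eq_imp_space_eq[OF s] by simp
  show "\<exists>A. countable A \<and> A \<subseteq> sets \<mu> \<and> \<Union> A = space \<mu> \<and> (\<forall>a\<in>A. emeasure \<mu> a \<noteq> \<infinity>)"
  proof (intro exI[of _ "range (\<lambda>n::nat. cball (0::'a) (real n))"] conjI ballI)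
    show "countable (range (\<lambda>n::nat. cball (0::'a) (real n)))" by simp
    show "range (\<lambda>n::nat. cball (0::'a) (real n)) \<subseteq> sets \<mu>"
      unfolding s by (intro subsetI) (auto intro: borel_closed)
    show "\<Union> (range (\<lambda>n::nat. cball (0::'a) (real n))) = space \<mu>"
    proof -
      have "x \<in> cball 0 (real (nat \<lceil>norm x\<rceil>))" for x :: 'a
        by (simp add: real_nat_ceiling_ge)
      then show ?thesis unfolding sp by blast
    qed
    show "emeasure \<mu> a \<noteq> \<infinity>" if a: "a \<in> range (\<lambda>n::nat. cball (0::'a) (real n))" for a
    proof -
      obtain n where "a = cball 0 (real n)" using a by blast
      moreover have "compact (cball (0::'a) (real n))" by simp
      ultimately show ?thesis using assms unfolding radon_measure_def by (metis less_irrefl)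
    qed
  qed
qed


theorem lemma3p4:
  fixes u :: "'a::euclidean_space \<Rightarrow> real"
    and \<mu> :: "'a measure" and \<sigma> :: "'a \<Rightarrow> real"
    and \<rho> :: "'a \<Rightarrow> real"
  assumes u_borel: "u \<in> borel_measurable borel"
    and u_bdd: "bounded (range u)"
    and radon: "radon_measure \<mu>"
    and \<sigma>_meas: "\<sigma> \<in> borel_measurable borel"
    and \<sigma>_unit: "\<forall>x. \<bar>\<sigma> x\<bar> = 1"
    and negl: "no_blowup_set u \<in> null_sets \<mu>"
    and \<rho>K: "\<rho> \<in> mollifiers"
    and \<rho>supp: "supp \<rho> \<subseteq> ball 0 (1/2)"
  shows "\<forall>\<phi>::'a \<Rightarrow> real. continuous_on UNIV \<phi> \<and> compact (supp \<phi>) \<longrightarrow>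
     ((\<lambda>l. \<integral>x. \<phi> x * conv u (rescale \<rho> l) x * conv_meas \<mu> \<sigma> (rescale \<rho> l) x \<partial>lborel)
        \<longlongrightarrow> (\<integral>x. \<phi> x * blowup_avg u (conv \<rho> \<rho>) x * \<sigma> x \<partial>\<mu>)) (at_right 0)"
proof (intro allI impI, elim conjE)
  fix \<phi> :: "'a \<Rightarrow> real"
  assume \<phi>c: "continuous_on UNIV \<phi>" and \<phi>K: "compact (supp \<phi>)"
  note \<rho>p = rho_props[OF \<rho>K \<rho>supp]
  note [measurable] = u_borel \<sigma>_meas
  have \<phi>b[measurable]: "\<phi> \<in> borel_measurable borel" using \<phi>c by (rule borel_measurable_continuous_onI)
  have \<rho>b[measurable]: "\<rho> \<in> borel_measurable borel" using \<rho>p(1) by (rule borel_measurable_continuous_onI)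
  have rb[measurable]: "rescale \<rho> l \<in> borel_measurable borel" for l
    by (rule rescale_borel[OF \<rho>p])
  have cb[measurable]: "conv u (rescale \<rho> l) \<in> borel_measurable borel" for l
    by (rule conv_borel[OF \<rho>p u_borel])
  obtain Mu where Mu: "\<And>x. \<bar>u x\<bar> \<le> Mu"
    using u_bdd unfolding bounded_iff by auto
  define K where "K = supp \<phi>"
  have cK: "compact K" using \<phi>K by (simp add: K_def)
  have \<phi>z: "\<phi> x = 0" if "x \<notin> K" for x
  proof (rule ccontr)
    assume "\<phi> x \<noteq> 0"
    then have "x \<in> {x. \<phi> x \<noteq> 0}" by simp
    then have "x \<in> K" unfolding K_def supp_def by (rule subsetD[OF closure_subset])
    then show False using that by simp
  qed
  obtain P where P: "\<And>x. \<bar>\<phi> x\<bar> \<le> P"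
  proof -
    have "compact (\<phi> ` K)"
      by (rule compact_continuous_image[OF continuous_on_subset[OF \<phi>c] cK]) simp
    then obtain B where B: "\<And>x. x \<in> \<phi> ` K \<Longrightarrow> norm x \<le> B"
      using compact_imp_bounded bounded_iff by metis
    have "\<bar>\<phi> x\<bar> \<le> max B 0" for x
    proof (cases "x \<in> K")
      case True then show ?thesis using B[of "\<phi> x"] by simp
    next
      case False then show ?thesis using \<phi>z[of x] by simp
    qed
    then show thesis by (rule that)
  qed
  have P0: "0 \<le> P" using P[of 0] by simp
  have Mu0: "0 \<le> Mu" using Mu[of 0] by simp
  have s\<mu>: "sets \<mu> = sets borel" using radon by (simp add: radon_measure_def)
  have sp\<mu>: "space \<mu> = UNIV" using sets_eq_imp_space_eq[OF s\<mu>] by simp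
  interpret \<mu>: sigma_finite_measure \<mu> by (rule radon_sigma_finite[OF radon])
  interpret PS: pair_sigma_finite lborel \<mu>
    unfolding pair_sigma_finite_def using lborel.sigma_finite_measure_axioms \<mu>.sigma_finite_measure_axioms by blast
  define C1 where "C1 = {x + e | x e. x \<in> K \<and> e \<in> cball (0::'a) 1}"
  have cC1: "compact C1" unfolding C1_def by (rule compact_sums[OF cK]) simp
  have C1s: "C1 \<in> sets \<mu>" unfolding s\<mu> using cC1 by (simp add: borel_compact)
  have C1f: "emeasure \<mu> C1 < \<infinity>" using radon cC1 by (simp add: radon_measure_def)
  have Ks: "K \<in> sets lborel" using cK by (simp add: borel_compact)
  have Kf: "emeasure lborel K < \<infinity>" using cK by (rule emeasure_compact_finite)
  obtain R where R: "R > 0" "\<And>a. \<bar>\<rho> a\<bar> \<le> R" using rho_bdd[OF \<rho>p] by auto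
  define N1 where "N1 = (\<integral>a. \<bar>\<rho> a\<bar> \<partial>lborel)"
  have N10: "0 \<le> N1" unfolding N1_def by simp
  define Fl where "Fl l y = (\<integral>x. \<phi> x * conv u (rescale \<rho> l) x * rescale \<rho> l (x - y) \<partial>lborel)" for l y
  have Flm: "Fl l \<in> borel_measurable borel" for l
    unfolding Fl_def[abs_def] by measurable
  have near: "y \<in> C1" if "0 < l" "l < 1" "\<phi> x * conv u (rescale \<rho> l) x * rescale \<rho> l (x - y) \<noteq> 0" for l x y
  proof -
    have "\<phi> x \<noteq> 0" "rescale \<rho> l (x - y) \<noteq> 0" using that(3) by auto
    then have xK: "x \<in> K" and "norm (x - y) < l/2"
      using \<phi>z rescale_supp[OF \<rho>p that(1)] by auto
    then have "y - x \<in> cball 0 1" using that(2) by (simp add: norm_minus_commute)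
    then have "x + (y - x) \<in> C1" unfolding C1_def using xK by blast
    then show ?thesis by simp
  qed
  have Flb: "\<bar>Fl l y\<bar> \<le> P * (Mu * N1) * N1 * indicator C1 y" if l: "0 < l" "l < 1" for l y
  proof (cases "y \<in> C1")
    case False
    then have "\<phi> x * conv u (rescale \<rho> l) x * rescale \<rho> l (x - y) = 0" for x
      using near[OF l] by blast
    then have "Fl l y = integral\<^sup>L lborel (\<lambda>x::'a. 0)" unfolding Fl_def by (simp only:)
    then have "Fl l y = 0" by simp
    then show ?thesis using False by simp
  next
    case True
    have "\<bar>Fl l y\<bar> \<le> (\<integral>x. P * (Mu * N1) * \<bar>rescale \<rho> l (x - y)\<bar> \<partial>lborel)"
      unfolding Fl_def
    proof (rule abs_int_le)
      show "integrable lborel (\<lambda>x. P * (Mu * N1) * \<bar>rescale \<rho> l (x - y)\<bar>)"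
        using integrable_rescale_shift[OF \<rho>p l(1)] by simp
      fix x
      have "\<bar>\<phi> x\<bar> * \<bar>conv u (rescale \<rho> l) x\<bar> \<le> P * (Mu * N1)"
        using P conv_bdd[OF \<rho>p u_borel Mu l(1)] P0 unfolding N1_def by (intro mult_mono) auto
      then have "\<bar>\<phi> x\<bar> * \<bar>conv u (rescale \<rho> l) x\<bar> * \<bar>rescale \<rho> l (x - y)\<bar> \<le> P * (Mu * N1) * \<bar>rescale \<rho> l (x - y)\<bar>"
        by (rule mult_right_mono) simp
      then show "\<bar>\<phi> x * conv u (rescale \<rho> l) x * rescale \<rho> l (x - y)\<bar> \<le> P * (Mu * N1) * \<bar>rescale \<rho> l (x - y)\<bar>"
        by (simp add: abs_mult)
    qed measurable
    also have "\<dots> = P * (Mu * N1) * N1"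
      using int_abs_rescale_shift[OF \<rho>p l(1), of y] unfolding N1_def by simp
    finally show ?thesis using True by simp
  qed
  have stepA: "(\<integral>x. \<phi> x * conv u (rescale \<rho> l) x * conv_meas \<mu> \<sigma> (rescale \<rho> l) x \<partial>lborel)
      = (\<integral>y. \<sigma> y * Fl l y \<partial>\<mu>)" if l: "0 < l" "l < 1" for l
  proof -
    define H where "H x y = \<phi> x * conv u (rescale \<rho> l) x * (rescale \<rho> l (x - y) * \<sigma> y)" for x y
    obtain Rl where Rl: "\<And>x. \<bar>rescale \<rho> l x\<bar> \<le> Rl" using rescale_bdd[OF \<rho>p l(1)] by auto
    have Rl0: "0 \<le> Rl" using Rl[of 0] by simp
    have eq1: "\<phi> x * conv u (rescale \<rho> l) x * conv_meas \<mu> \<sigma> (rescale \<rho> l) x = (\<integral>y. H x y \<partial>\<mu>)" for x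
      by (simp add: conv_meas_def H_def)
    have eq2: "(\<integral>x. H x y \<partial>lborel) = \<sigma> y * Fl l y" for y
    proof -
      have "\<And>x. H x y = \<sigma> y * (\<phi> x * conv u (rescale \<rho> l) x * rescale \<rho> l (x - y))"
        by (simp add: H_def mult_ac)
      then show ?thesis by (simp add: Fl_def)
    qed
    have Hm: "(\<lambda>(x, y). H x y) \<in> borel_measurable (lborel \<Otimes>\<^sub>M \<mu>)"
    proof -
      have "(\<lambda>(x, y). H x y) \<in> borel_measurable (borel \<Otimes>\<^sub>M borel)"
        unfolding H_def by measurable
      then show ?thesis
        by (simp add: measurable_cong_sets[OF sets_pair_measure_cong[OF sets_lborel s\<mu>] refl])
    qed
    have int: "integrable (lborel \<Otimes>\<^sub>M \<mu>) (\<lambda>(x, y). H x y)"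
    proof (rule integrable_bdd_supp[where S="K \<times> C1" and B="P * (Mu * N1) * Rl"])
      show "K \<times> C1 \<in> sets (lborel \<Otimes>\<^sub>M \<mu>)" using Ks C1s by (rule pair_measureI)
      have "emeasure (lborel \<Otimes>\<^sub>M \<mu>) (K \<times> C1) = emeasure lborel K * emeasure \<mu> C1"
        using Ks C1s by (rule \<mu>.emeasure_pair_measure_Times)
      then show "emeasure (lborel \<Otimes>\<^sub>M \<mu>) (K \<times> C1) < \<infinity>"
        using Kf C1f by (simp add: ennreal_mult_less_top)
      fix z :: "'a \<times> 'a"
      obtain x y where z: "z = (x, y)" by (cases z)
      show "\<bar>(case z of (x, y) \<Rightarrow> H x y)\<bar> \<le> P * (Mu * N1) * Rl * indicator (K \<times> C1) z"
      proof (cases "H x y = 0")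
        case True then show ?thesis using z P0 Mu0 N10 Rl0 by (simp add: indicator_def)
      next
        case False
        then have "\<phi> x * conv u (rescale \<rho> l) x * rescale \<rho> l (x - y) \<noteq> 0" "\<phi> x \<noteq> 0"
          by (auto simp: H_def)
        then have in1: "(x, y) \<in> K \<times> C1" using near[OF l] \<phi>z by blast
        have c1: "\<bar>\<phi> x\<bar> * \<bar>conv u (rescale \<rho> l) x\<bar> \<le> P * (Mu * N1)"
          using P conv_bdd[OF \<rho>p u_borel Mu l(1)] P0 unfolding N1_def by (intro mult_mono) auto
        have c2: "\<bar>rescale \<rho> l (x - y) * \<sigma> y\<bar> \<le> Rl" using Rl \<sigma>_unit by (simp add: abs_mult)
        have "\<bar>\<phi> x\<bar> * \<bar>conv u (rescale \<rho> l) x\<bar> * \<bar>rescale \<rho> l (x - y) * \<sigma> y\<bar> \<le> P * (Mu * N1) * Rl"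
          by (rule mult_mono[OF c1 c2]) (use P0 Mu0 N10 in auto)
        then show ?thesis using z in1 by (simp add: H_def abs_mult)
      qed
    qed (use Hm in simp)
    have "(\<integral>x. \<phi> x * conv u (rescale \<rho> l) x * conv_meas \<mu> \<sigma> (rescale \<rho> l) x \<partial>lborel)
        = (\<integral>x. (\<integral>y. H x y \<partial>\<mu>) \<partial>lborel)" by (simp only: eq1)
    also have "\<dots> = (\<integral>y. (\<integral>x. H x y \<partial>lborel) \<partial>\<mu>)"
      using PS.Fubini_integral[of H] int by simp
    also have "\<dots> = (\<integral>y. \<sigma> y * Fl l y \<partial>\<mu>)" by (simp only: eq2)
    finally show ?thesis .
  qed
  define N where "N = no_blowup_set u"
  have Ns: "N \<in> sets borel" using negl s\<mu> unfolding N_def null_sets_def by auto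
  define ff where "ff y = \<phi> y * blowup_avg u (conv \<rho> \<rho>) y * \<sigma> y" for y
  have lim_pt: "((\<lambda>l. \<sigma> y * Fl l y) \<longlongrightarrow> ff y) (at_right 0)" if y: "y \<notin> N" for y
  proof -
    have ex: "\<exists>v. is_blowup u y v" using y unfolding N_def no_blowup_set_def by simp
    define v0 where "v0 = (SOME v. is_blowup u y v)"
    have bl: "is_blowup u y v0" unfolding v0_def by (rule someI_ex[OF ex])
    have ba: "blowup_avg u (conv \<rho> \<rho>) y = (\<integral>z. conv \<rho> \<rho> z * v0 z \<partial>lborel)"
      unfolding blowup_avg_def v0_def using ex by simp
    have "((\<lambda>l. Fl l y) \<longlongrightarrow> \<phi> y * (\<integral>z. conv \<rho> \<rho> z * v0 z \<partial>lborel)) (at_right 0)"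
      unfolding Fl_def by (rule F_tendsto[OF \<rho>p u_borel Mu \<phi>c P bl])
    then have "((\<lambda>l. \<sigma> y * Fl l y) \<longlongrightarrow> \<sigma> y * (\<phi> y * (\<integral>z. conv \<rho> \<rho> z * v0 z \<partial>lborel))) (at_right 0)"
      by (rule tendsto_mult_left)
    then show ?thesis by (simp add: ff_def ba mult_ac)
  qed
  have ffm: "ff \<in> borel_measurable borel"
  proof -
    have Nm[measurable]: "N \<in> sets borel" by (rule Ns)
    have Flm'[measurable]: "(\<lambda>y. Fl l y) \<in> borel_measurable borel" for l using Flm[of l] by simp
    have seq: "filterlim (\<lambda>n. 1 / real (Suc n)) (at_right 0) sequentially"
    proof (rule tendsto_imp_filterlim_at_right)
      show "(\<lambda>n. 1 / real (Suc n)) \<longlonglongrightarrow> 0"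
        using LIMSEQ_Suc[OF lim_1_over_n] by simp
      show "\<forall>\<^sub>F n in sequentially. 0 < 1 / real (Suc n)" by simp
    qed
    have eq: "ff y = (if y \<in> N then 0 else lim (\<lambda>n. \<sigma> y * Fl (1 / real (Suc n)) y))" for y
    proof (cases "y \<in> N")
      case True
      then have "\<not> (\<exists>v. is_blowup u y v)" unfolding N_def no_blowup_set_def by simp
      then show ?thesis using True by (simp add: ff_def blowup_avg_def)
    next
      case False
      have "(\<lambda>n. \<sigma> y * Fl (1 / real (Suc n)) y) \<longlonglongrightarrow> ff y"
        using filterlim_compose[OF lim_pt[OF False] seq] by simp
      then show ?thesis using False by (simp add: limI)
    qed
    have "(\<lambda>y. if y \<in> N then 0 else lim (\<lambda>n. \<sigma> y * Fl (1 / real (Suc n)) y)) \<in> borel_measurable borel"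
      by measurable
    then show ?thesis by (simp add: eq[abs_def])
  qed
  have "((\<lambda>l. \<integral>y. \<sigma> y * Fl l y \<partial>\<mu>) \<longlongrightarrow> integral\<^sup>L \<mu> ff) (at_right 0)"
  proof (rule dct_at_right[where w="\<lambda>y. P * (Mu * N1) * N1 * indicator C1 y"])
    show "ff \<in> borel_measurable \<mu>" using ffm by (simp add: measurable_cong_sets[OF s\<mu> refl])
    show "(\<lambda>y. \<sigma> y * Fl l y) \<in> borel_measurable \<mu>" for l
      using Flm[of l] by (simp add: measurable_cong_sets[OF s\<mu> refl])
    show "integrable \<mu> (\<lambda>y. P * (Mu * N1) * N1 * indicator C1 y)"
      using C1s C1f by (intro integrable_mult_right integrable_real_indicator) auto
    show "AE y in \<mu>. ((\<lambda>l. \<sigma> y * Fl l y) \<longlongrightarrow> ff y) (at_right 0)"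
      using AE_not_in[OF negl] by eventually_elim (use lim_pt N_def in simp)
    have "\<forall>\<^sub>F l in at_right 0. 0 < l \<and> l < (1::real)"
      unfolding eventually_at_right_field by (intro exI[of _ 1]) simp
    then show "\<forall>\<^sub>F l in at_right 0. AE y in \<mu>. norm (\<sigma> y * Fl l y) \<le> P * (Mu * N1) * N1 * indicator C1 y"
    proof eventually_elim
      case (elim l)
      show ?case using Flb[of l] elim \<sigma>_unit by (intro AE_I2) (simp add: abs_mult)
    qed
  qed
  moreover have "\<forall>\<^sub>F l in at_right 0. (\<integral>y. \<sigma> y * Fl l y \<partial>\<mu>) = (\<integral>x. \<phi> x * conv u (rescale \<rho> l) x * conv_meas \<mu> \<sigma> (rescale \<rho> l) x \<partial>lborel)"
  proof -
    have "\<forall>\<^sub>F l in at_right 0. 0 < l \<and> l < (1::real)"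
      unfolding eventually_at_right_field by (intro exI[of _ 1]) simp
    then show ?thesis by eventually_elim (use stepA in simp)
  qed
  ultimately have "((\<lambda>l. \<integral>x. \<phi> x * conv u (rescale \<rho> l) x * conv_meas \<mu> \<sigma> (rescale \<rho> l) x \<partial>lborel) \<longlongrightarrow> integral\<^sup>L \<mu> ff) (at_right 0)"
    by (rule Lim_transform_eventually)
  then show "((\<lambda>l. \<integral>x. \<phi> x * conv u (rescale \<rho> l) x * conv_meas \<mu> \<sigma> (rescale \<rho> l) x \<partial>lborel)
        \<longlongrightarrow> (\<integral>x. \<phi> x * blowup_avg u (conv \<rho> \<rho>) x * \<sigma> x \<partial>\<mu>)) (at_right 0)"
    unfolding ff_def .
qed


end
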